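(* Let $C \subset \mathbb{R}^n$ be convex and closed with nonempty interior, and let $h\colon C\to\mathbb{R}$ be Legendre on $C$, continuous on $C$, and satisfy condition (B): for every sequence $(x_k)_{k\in\mathbb{N}} \subset \mathrm{int}\, C$ and every $y \in C$, if $x_k \to y$ then $D_h(y,x_k) \to 0$. Let $x \in \mathrm{bd}\, C$ and $y \in C$ be such that $\frac{x+y}{2} \in \mathrm{int}\, C$. Then $D_h\big(y, (1-\lambda)x + \lambda y\big) \to +\infty$ as $\lambda \to 0^+$.
   Context: A convex function $h \colon C \to \mathbb{R}$ on a convex set $C\subset\mathbb{R}^n$ with nonempty interior is called Legendre if (1) $h$ is continuously differentiable on $\mathrm{int}\, C$ and $\|\nabla h(x)\| \to +\infty$ whenever $x \in \mathrm{int}\, C$ approaches a point of the boundary of $C$; and (2) $h$ is strictly convex on $\mathrm{int}\, C$. The Bregman divergence is $D_h(y,x) = h(y) - h(x) - \langle \nabla h(x), y - x\rangle$ for $y \in C$, $x \in \mathrm{int}\, C$. $\mathrm{bd}\, C$ denotes the boundary of $C$. *)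

theory Defs
  imports "HOL-Analysis.Analysis"
begin

definition grad :: "('a::euclidean_space \<Rightarrow> real) \<Rightarrow> 'a \<Rightarrow> 'a" where
  "grad h x = (\<Sum>b\<in>Basis. frechet_derivative h (at x) b *\<^sub>R b)"

definition strict_convex_on :: "'a::real_vector set \<Rightarrow> ('a \<Rightarrow> real) \<Rightarrow> bool" where
  "strict_convex_on S f \<longleftrightarrow>
     (\<forall>x\<in>S. \<forall>y\<in>S. x \<noteq> y \<longrightarrow> (\<forall>u::real. 0 < u \<and> u < 1 \<longrightarrow>
        f ((1 - u) *\<^sub>R x + u *\<^sub>R y) < (1 - u) * f x + u * f y))"

definition legendre :: "'a::euclidean_space set \<Rightarrow> ('a \<Rightarrow> real) \<Rightarrow> bool" where
  "legendre C h \<longleftrightarrow>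
     convex C \<and> interior C \<noteq> {} \<and> convex_on C h \<and>
     (\<forall>x\<in>interior C. h differentiable (at x)) \<and>
     continuous_on (interior C) (grad h) \<and>
     (\<forall>z\<in>frontier C. filterlim (\<lambda>x. norm (grad h x)) at_top (at z within interior C)) \<and>
     strict_convex_on (interior C) h"

definition bregman :: "('a::euclidean_space \<Rightarrow> real) \<Rightarrow> 'a \<Rightarrow> 'a \<Rightarrow> real" where
  "bregman h y x = h y - h x - grad h x \<bullet> (y - x)"

end

theory Submission imports Defs begin

lemma grad_inner:
  fixes h :: "'a::euclidean_space \<Rightarrow> real"
  assumes "h differentiable (at z)"
  shows "grad h z \<bullet> v = frechet_derivative h (at z) v"
proof -
  have lin: "linear (frechet_derivative h (at z))"
    using assms frechet_derivative_works has_derivative_linear by blast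
  have "frechet_derivative h (at z) v = frechet_derivative h (at z) (\<Sum>b\<in>Basis. (v \<bullet> b) *\<^sub>R b)"
    by (simp add: euclidean_representation)
  also have "\<dots> = (\<Sum>b\<in>Basis. (v \<bullet> b) * frechet_derivative h (at z) b)"
    using lin by (simp add: linear_sum linear_scale)
  also have "\<dots> = (\<Sum>b\<in>Basis. frechet_derivative h (at z) b * (b \<bullet> v))"
    by (intro sum.cong refl) (subst inner_commute, rule mult.commute)
  finally show ?thesis unfolding grad_def
    by (simp add: inner_sum_left)
qed

lemma subgrad:
  fixes h :: "'a::euclidean_space \<Rightarrow> real"
  assumes cv: "convex_on S h" and z: "z \<in> S" and w: "w \<in> S" and d: "h differentiable (at z)"
  shows "h z + grad h z \<bullet> (w - z) \<le> h w"
proof -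
  define f' where "f' = frechet_derivative h (at z)"
  have hd: "(h has_derivative f') (at z)" using d frechet_derivative_works f'_def by blast
  have lin: "linear f'" using hd has_derivative_linear by blast
  have g: "((\<lambda>s::real. z + s *\<^sub>R (w - z)) has_derivative (\<lambda>s. s *\<^sub>R (w - z))) (at 0)"
    by (auto intro!: derivative_eq_intros)
  have "((\<lambda>s. h (z + s *\<^sub>R (w - z))) has_derivative (\<lambda>s. f' (s *\<^sub>R (w - z)))) (at 0)"
    using has_derivative_compose[OF g] hd by (simp add: o_def)
  moreover have "(\<lambda>s. f' (s *\<^sub>R (w - z))) = (*) (f' (w - z))"
    using lin by (auto simp: linear_scale mult.commute)
  ultimately have "((\<lambda>s. h (z + s *\<^sub>R (w - z))) has_field_derivative f' (w - z)) (at 0)"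
    by (simp add: has_field_derivative_def mult.commute)
  hence "((\<lambda>s. (h (z + s *\<^sub>R (w - z)) - h (z + 0 *\<^sub>R (w - z))) / (s - 0)) \<longlongrightarrow> f' (w - z)) (at 0)"
    unfolding has_field_derivative_iff .
  hence "((\<lambda>s. (h (z + s *\<^sub>R (w - z)) - h (z + 0 *\<^sub>R (w - z))) / (s - 0)) \<longlongrightarrow> f' (w - z)) (at_right 0)"
    by (rule tendsto_mono[rotated]) (rule at_le, simp)
  hence lim: "((\<lambda>s. (h (z + s *\<^sub>R (w - z)) - h z) / s) \<longlongrightarrow> f' (w - z)) (at_right 0)"
    by simp
  have ev: "eventually (\<lambda>s. (h (z + s *\<^sub>R (w - z)) - h z) / s \<le> h w - h z) (at_right (0::real))"
    unfolding eventually_at_right_field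
  proof (intro exI[of _ 1] conjI allI impI)
    fix s :: real assume s: "0 < s" "s < 1"
    have "h ((1 - s) *\<^sub>R z + s *\<^sub>R w) \<le> (1 - s) * h z + s * h w"
      using convex_onD[OF cv, of s z w] s z w by auto
    moreover have "(1 - s) *\<^sub>R z + s *\<^sub>R w = z + s *\<^sub>R (w - z)" by (simp add: algebra_simps)
    ultimately have "h (z + s *\<^sub>R (w - z)) - h z \<le> s * (h w - h z)" by (simp add: algebra_simps)
    thus "(h (z + s *\<^sub>R (w - z)) - h z) / s \<le> h w - h z" using s by (simp add: divide_simps mult.commute)
  qed simp
  have "f' (w - z) \<le> h w - h z"
    using tendsto_le[OF trivial_limit_at_right_real tendsto_const lim ev] .
  thus ?thesis using grad_inner[OF d] f'_def by simp
qed


theorem lemma1: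
  fixes C :: "'a::euclidean_space set" and h :: "'a \<Rightarrow> real" and x y :: 'a
  assumes "convex C" and "closed C" and "interior C \<noteq> {}"
    and "legendre C h"
    and "continuous_on C h"
    and condB: "\<And>X z. (\<forall>k. X k \<in> interior C) \<Longrightarrow> z \<in> C \<Longrightarrow> X \<longlonglongrightarrow> z \<Longrightarrow>
                  (\<lambda>k. bregman h z (X k)) \<longlonglongrightarrow> 0"
    and "x \<in> frontier C" and "y \<in> C"
    and "(1/2) *\<^sub>R (x + y) \<in> interior C"
  shows "filterlim (\<lambda>t. bregman h y ((1 - t) *\<^sub>R x + t *\<^sub>R y)) at_top (at_right 0)"
proof -
  note leg = assms(4)[unfolded legendre_def]
  have cvx: "convex_on C h" using leg by blast
  have cvi: "convex_on (interior C) h" using convex_on_subset[OF cvx interior_subset convex_interior[OF assms(1)]] .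
  have diff: "\<And>z. z \<in> interior C \<Longrightarrow> h differentiable (at z)" using leg by blast
  have blow: "filterlim (\<lambda>z. norm (grad h z)) at_top (at x within interior C)"
    using leg assms(7) by blast
  have xC: "x \<in> C" using assms(7) assms(2) frontier_subset_closed by blast
  have xni: "x \<notin> interior C" using assms(7) by (simp add: frontier_def)
  define m where "m = (1/2) *\<^sub>R (x + y)"
  have mi: "m \<in> interior C" using assms(9) m_def by simp
  obtain r where r: "r > 0" "cball m r \<subseteq> interior C"
    using mi open_contains_cball open_interior by blast
  have xy: "x \<noteq> y" using mi xni m_def by (auto simp: scaleR_2 [symmetric])
  define z where "z = (\<lambda>t::real. (1 - t) *\<^sub>R x + t *\<^sub>R y)"
  have zint: "z t \<in> interior C" if "0 < t" "t \<le> 1/2" for t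
  proof -
    have "x - (2*t) *\<^sub>R (x - m) \<in> interior C"
      using mem_interior_closure_convex_shrink[OF assms(1) mi, of x "2*t"] that xC assms(2)
      by (simp add: closure_closed)
    moreover have "x - (2*t) *\<^sub>R (x - m) = z t" unfolding z_def m_def
      by (simp add: algebra_simps) (simp only: mult_2_right scaleR_add_left)
    ultimately show ?thesis by simp
  qed
  have zne: "z t \<noteq> x" if "t \<noteq> 0" for t
  proof
    assume "z t = x"
    hence "t *\<^sub>R (y - x) = 0" unfolding z_def by (simp add: algebra_simps)
    thus False using that xy by simp
  qed
  have zlim: "(z \<longlongrightarrow> x) (at_right 0)"
  proof -
    have "((\<lambda>t::real. (1 - t) *\<^sub>R x + t *\<^sub>R y) \<longlongrightarrow> (1 - 0) *\<^sub>R x + 0 *\<^sub>R y) (at_right 0)"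
      by (intro tendsto_intros)
    thus ?thesis unfolding z_def by simp
  qed
  have zat: "filterlim z (at x within interior C) (at_right 0)"
    unfolding filterlim_at
  proof
    show "eventually (\<lambda>t. z t \<in> interior C \<and> z t \<noteq> x) (at_right 0)"
      unfolding eventually_at_right_field
    proof (intro exI[of _ "1/2"] conjI allI impI)
      fix t :: real assume "0 < t" "t < 1/2"
      thus "z t \<in> interior C" using zint[of t] by auto
      show "z t \<noteq> x" using zne[of t] \<open>0 < t\<close> by auto
    qed simp
  qed (rule zlim)
  have G: "filterlim (\<lambda>t. norm (grad h (z t))) at_top (at_right 0)"
    using filterlim_compose[OF blow zat] .
  define S where "S = cball m r \<union> closed_segment x y"
  have SC: "S \<subseteq> C" unfolding S_def using r(2) interior_subset closed_segment_subset[OF xC assms(8) assms(1)] by blast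
  have "compact S" unfolding S_def by (intro compact_Un compact_cball compact_segment)
  hence "compact (h ` S)" using continuous_on_subset[OF assms(5) SC] compact_continuous_image by blast
  hence "bounded (h ` S)" by (rule compact_imp_bounded)
  then obtain B where "\<forall>v\<in>h ` S. \<bar>v\<bar> \<le> B" by (auto simp: bounded_real)
  hence B: "\<And>w. w \<in> S \<Longrightarrow> \<bar>h w\<bar> \<le> B" by auto
  have hy: "\<bar>h y\<bar> \<le> B" using B S_def by auto
  have zS: "z t \<in> S" if "0 \<le> t" "t \<le> 1" for t
  proof -
    have "z t \<in> closed_segment x y" unfolding z_def in_segment using that by blast
    thus ?thesis unfolding S_def by blast
  qed
  have key: "r * norm (grad h (z t)) - 4 * B \<le> bregman h y (z t)"
    if t: "0 < t" "t < 1/2" and Gb: "r * norm (grad h (z t)) > 2 * B" for t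
  proof -
    define g where "g = grad h (z t)"
    define G where "G = norm g"
    have B0: "B \<ge> 0" using hy by linarith
    have "G \<noteq> 0"
    proof
      assume G0: "G = 0"
      have "r * norm (grad h (z t)) = r * G" unfolding G_def g_def ..
      also have "\<dots> = 0" unfolding G0 by simp
      finally show False using Gb B0 by linarith
    qed
    hence Gp: "G > 0" unfolding G_def using norm_ge_zero[of g] by linarith
    define w where "w = m + r *\<^sub>R (g /\<^sub>R G)"
    have n1: "norm (g /\<^sub>R G) = 1" using Gp unfolding G_def by simp
    have "dist m w = norm (r *\<^sub>R (g /\<^sub>R G))" unfolding w_def dist_norm
      by simp
    also have "\<dots> = r" by (subst norm_scaleR) (simp only: n1 mult_1_right abs_of_pos[OF r(1)])
    finally have "dist m w = r" .
    hence "w \<in> cball m r" by simp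
    hence wi: "w \<in> interior C" and wS: "w \<in> S" using r(2) unfolding S_def by auto
    have zi: "z t \<in> interior C" using zint t by simp
    have sg: "h (z t) + g \<bullet> (w - z t) \<le> h w"
      using subgrad[OF cvi zi wi diff[OF zi]] unfolding g_def .
    have "w - z t = (1/2 - t) *\<^sub>R (y - x) + r *\<^sub>R (g /\<^sub>R G)"
      unfolding w_def z_def m_def
      by (simp add: algebra_simps) (simp only: scaleR_add_left[symmetric] field_sum_of_halves scaleR_one)
    have gg: "g \<bullet> g = G * G" unfolding G_def by (simp add: dot_square_norm power2_eq_square)
    have gG: "g \<bullet> (g /\<^sub>R G) = G"
    proof -
      have "g \<bullet> (g /\<^sub>R G) = (g \<bullet> g) / G" by (simp add: inner_scaleR_right divide_inverse mult.commute)
      also have "\<dots> = G" using gg Gp by simp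
      finally show ?thesis .
    qed
    have "g \<bullet> (w - z t) = (1/2 - t) * (g \<bullet> (y - x)) + r * G"
      unfolding \<open>w - z t = _\<close> inner_add_right inner_scaleR_right using gg Gp by simp
    define a where "a = g \<bullet> (y - x)"
    have hz: "\<bar>h (z t)\<bar> \<le> B" using B zS t by simp
    have hw: "\<bar>h w\<bar> \<le> B" using B wS by simp
    have ineq: "(1/2 - t) * a \<le> 2 * B - r * G"
      unfolding a_def using sg hz hw \<open>g \<bullet> (w - z t) = _\<close> by linarith
    have rhsneg: "2 * B - r * G < 0" using Gb G_def g_def by simp
    have aneg: "a < 0"
    proof (rule ccontr)
      assume "\<not> a < 0"
      hence "(1/2 - t) * a \<ge> 0" using t by simp
      thus False using ineq rhsneg by linarith
    qed
    have "(1/2) * a \<le> (1/2 - t) * a" using aneg t by (simp add: mult_right_mono_neg)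
    hence a2: "(1/2) * a \<le> 2 * B - r * G" using ineq by linarith
    have m2: "(1/2) * (-a) \<le> (1 - t) * (-a)" using t aneg by (intro mult_right_mono) auto
    have "-(1 - t) * a \<ge> -(1/2) * a" using m2 by (simp only: mult_minus_left mult_minus_right)
    have yz: "y - z t = (1 - t) *\<^sub>R (y - x)" unfolding z_def by (simp add: algebra_simps)
    have "bregman h y (z t) = h y - h (z t) - (1 - t) * a"
      unfolding bregman_def yz a_def g_def by simp
    moreover have rG: "r * norm (grad h (z t)) = r * G" unfolding G_def g_def ..
    moreover have e: "-(1 - t) * a = -((1 - t) * a)" by (rule mult_minus_left)
    ultimately show ?thesis using hy hz a2 \<open>-(1 - t) * a \<ge> -(1/2) * a\<close> by linarith
  qed
  have L0: "filterlim (\<lambda>t. r * norm (grad h (z t))) at_top (at_right 0)"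
    using filterlim_tendsto_pos_mult_at_top[OF tendsto_const r(1) G] .
  have L1: "filterlim (\<lambda>t. (- 4 * B) + r * norm (grad h (z t))) at_top (at_right 0)"
    using filterlim_tendsto_add_at_top[OF tendsto_const L0] .
  have "(\<lambda>t. (- 4 * B) + r * norm (grad h (z t))) = (\<lambda>t. r * norm (grad h (z t)) - 4 * B)"
    by (rule ext) simp
  with L1 have L: "filterlim (\<lambda>t. r * norm (grad h (z t)) - 4 * B) at_top (at_right 0)" by simp
  have ev1: "eventually (\<lambda>t. r * norm (grad h (z t)) > 2 * B) (at_right 0)"
    using L0 unfolding filterlim_at_top_dense by blast
  have ev2: "eventually (\<lambda>t::real. 0 < t \<and> t < 1/2) (at_right 0)"
    unfolding eventually_at_right_field by (intro exI[of _ "1/2"]) auto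
  have "eventually (\<lambda>t. r * norm (grad h (z t)) - 4 * B \<le> bregman h y (z t)) (at_right 0)"
    using eventually_conj[OF ev1 ev2] by eventually_elim (use key in auto)
  from filterlim_at_top_mono[OF L this] show ?thesis unfolding z_def .
qed

end
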